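(* Let $X$ be a closed manifold, $\{g_t\}_{0\le t\le 1}$ an isotopy of homeomorphisms from $g_0=\mathrm{id}_X$ to $g=g_1$, with isotopy class $\widetilde g$ relative to endpoints, and let $\varphi\colon X\to S^1$ be continuous. Let $a=[\alpha_\varphi]\in\mathrm{H}^1(X;\mathbb{R})$ (with $A$ the discrete group $\mathbb{R}$), let $\{\widehat g_t\}$ be the lift of $\{g_t\}$ to bundle automorphisms of $\widehat X_a$ with $\widehat g_0=\mathrm{id}$, and set $\widehat g=\widehat g_1$. Then for $x\in X$ and a $g$-invariant Borel probability measure $\mu$ on $X$, $h_{x,\widetilde g}([\varphi])=\widehat{\mathrm{rot}}_{x,\alpha_\varphi}(\widehat g)$ and $h_{\mu,\widetilde g}([\varphi])=\widehat{\mathrm{rot}}_{\mu,\alpha_\varphi}(\widehat g)$.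
   Context: For a continuous $\varphi\colon X\to S^1=\mathbb{R}/\mathbb{Z}$ and a path $\gamma\colon[0,1]\to X$, let $\varphi_\gamma\colon[0,1]\to\mathbb{R}$ be a continuous lift of $t\mapsto\varphi(\gamma(t))$ and $\Delta_\varphi(\gamma)=\varphi_\gamma(1)-\varphi_\gamma(0)$; $\alpha_\varphi$ is the real singular $1$-cocycle on $X$ given by $\alpha_\varphi(\gamma)=\Delta_\varphi(\gamma)$. The homological translation vector is $h_{x,\widetilde g}([\varphi])=\lim_{n\to\infty}\frac1n\Delta_\varphi(\{g_t(x)\}*\{g_t(g(x))\}*\cdots*\{g_t(g^{n-1}(x))\})$ (concatenation of paths), when the limit exists, and the mean version is $h_{\mu,\widetilde g}([\varphi])=\int_X\Delta_\varphi(\{g_t(x)\}_{t})\,d\mu(x)$. For $a\in\mathrm{H}^1(X;\mathbb{R})$, $\pi\colon\widehat X_a\to X$ is the principal bundle with discrete fiber $\mathbb{R}$ whose holonomy is $a$, $T_r$ the action of $r\in\mathbb{R}$, and bundle automorphisms are homeomorphisms of $\widehat X_a$ covering homeomorphisms of $X$. For a real $1$-cocycle $\alpha$ representing $a$, let $\theta\colon\widehat X_a\to\mathbb{R}$ satisfy $d\theta=\pi^*\alpha$ and $\theta(T_r\widehat y)=\theta(\widehat y)+r$; $\rho_{x,\alpha}(\widehat g)=\theta(\widehat g(\widehat x))-\theta(\widehat x)$ for $\widehat x\in\pi^{-1}(x)$; $\widehat{\mathrm{rot}}_{x,\alpha}(\widehat g)=\lim_n\rho_{x,\alpha}(\widehat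 g^n)/n$ and $\widehat{\mathrm{rot}}_{\mu,\alpha}(\widehat g)=\int_X\rho_{x,\alpha}(\widehat g)\,d\mu(x)$. *)

theory Defs
  imports "HOL-Probability.Probability"
begin

definition closed_manifold :: "'a topology \<Rightarrow> bool" where
  "closed_manifold X \<longleftrightarrow> compact_space X \<and> Hausdorff_space X \<and> second_countable X \<and>
     (\<exists>n. \<forall>x\<in>topspace X. \<exists>U V. openin X U \<and> x \<in> U \<and> openin (Euclidean_space n) V \<and>
          (subtopology X U) homeomorphic_space (subtopology (Euclidean_space n) V))"

text \<open>S^1 = R/Z is modelled as the unit circle in the complex plane, with the covering
  projection R -> S^1 given by t \<mapsto> exp(2 pi i t).\<close>
definition circle_proj :: "real \<Rightarrow> complex" where
  "circle_proj t = exp (2 * of_real pi * \<i> * of_real t)"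

definition Delta :: "('a \<Rightarrow> complex) \<Rightarrow> (real \<Rightarrow> 'a) \<Rightarrow> real" where
  "Delta phi \<gamma> = (SOME d. \<exists>f. continuous_on {0..1} f \<and>
        (\<forall>t\<in>{0..1}. circle_proj (f t) = phi (\<gamma> t)) \<and> d = f 1 - f 0)"

definition join_paths :: "(real \<Rightarrow> 'a) \<Rightarrow> (real \<Rightarrow> 'a) \<Rightarrow> real \<Rightarrow> 'a" where
  "join_paths g1 g2 = (\<lambda>t. if t \<le> 1/2 then g1 (2 * t) else g2 (2 * t - 1))"

fun concat_paths :: "(real \<Rightarrow> 'a) list \<Rightarrow> real \<Rightarrow> 'a" where
  "concat_paths [] = undefined"
| "concat_paths [p] = p"
| "concat_paths (p # q # ps) = join_paths p (concat_paths (q # ps))"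

definition orbit_path :: "(real \<Rightarrow> 'a \<Rightarrow> 'a) \<Rightarrow> 'a \<Rightarrow> nat \<Rightarrow> real \<Rightarrow> 'a" where
  "orbit_path G x n = concat_paths (map (\<lambda>k t. G t ((G 1 ^^ k) x)) [0..<n])"

definition isotopy_from_id :: "'a topology \<Rightarrow> (real \<Rightarrow> 'a \<Rightarrow> 'a) \<Rightarrow> bool" where
  "isotopy_from_id X G \<longleftrightarrow>
     continuous_map (prod_topology (top_of_set {0..1}) X) X (\<lambda>(t, x). G t x) \<and>
     (\<forall>t\<in>{0..1}. homeomorphic_map X X (G t)) \<and>
     (\<forall>x\<in>topspace X. G 0 x = x)"

text \<open>Model: the total space is X \<times> R; its topology is generated by the "sheets"
  {(y, f y + c) | y \<in> U}, where U is open in X, f is a continuous real lift of phi on U and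
  c \<in> R.  The projection is fst, and r \<in> R acts by T_r(y,s) = (y, s + r).  Lifting a path
  gamma of X starting at (gamma 0, s) ends at (gamma 1, s + Delta_phi(gamma)), so the holonomy
  is alpha_phi.\<close>
definition bundle_top :: "'a topology \<Rightarrow> ('a \<Rightarrow> complex) \<Rightarrow> ('a \<times> real) topology" where
  "bundle_top X phi = topology_generated_by
     {{(y, f y + c) | y. y \<in> U} | U f c. openin X U \<and>
        continuous_map (subtopology X U) euclideanreal f \<and>
        (\<forall>y\<in>U. circle_proj (f y) = phi y)}"

definition bundle_act :: "real \<Rightarrow> 'a \<times> real \<Rightarrow> 'a \<times> real" where
  "bundle_act r = (\<lambda>(y, s). (y, s + r))"

text \<open>theta : \<widehat>X_a -> R with d theta = pi^* alpha_phi (evaluated on singular 1-simplices,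
  i.e. paths) and theta(T_r y) = theta(y) + r.\<close>
definition theta_function :: "'a topology \<Rightarrow> ('a \<Rightarrow> complex) \<Rightarrow> ('a \<times> real \<Rightarrow> real) \<Rightarrow> bool" where
  "theta_function X phi \<theta> \<longleftrightarrow>
     (\<forall>\<sigma>. pathin (bundle_top X phi) \<sigma> \<longrightarrow> \<theta> (\<sigma> 1) - \<theta> (\<sigma> 0) = Delta phi (fst \<circ> \<sigma>)) \<and>
     (\<forall>r. \<forall>y\<in>topspace (bundle_top X phi). \<theta> (bundle_act r y) = \<theta> y + r)"

definition lifted_isotopy ::
  "'a topology \<Rightarrow> ('a \<Rightarrow> complex) \<Rightarrow> (real \<Rightarrow> 'a \<Rightarrow> 'a) \<Rightarrow> (real \<Rightarrow> 'a \<times> real \<Rightarrow> 'a \<times> real) \<Rightarrow> bool" where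
  "lifted_isotopy X phi G Gh \<longleftrightarrow>
     (let Xh = bundle_top X phi in
       continuous_map (prod_topology (top_of_set {0..1}) Xh) Xh (\<lambda>(t, y). Gh t y) \<and>
       (\<forall>t\<in>{0..1}. homeomorphic_map Xh Xh (Gh t)) \<and>
       (\<forall>t\<in>{0..1}. \<forall>y\<in>topspace Xh. fst (Gh t y) = G t (fst y)) \<and>
       (\<forall>t\<in>{0..1}. \<forall>r. \<forall>y\<in>topspace Xh. Gh t (bundle_act r y) = bundle_act r (Gh t y)) \<and>
       (\<forall>y\<in>topspace Xh. Gh 0 y = y))"

definition rho :: "('a \<times> real \<Rightarrow> real) \<Rightarrow> ('a \<times> real \<Rightarrow> 'a \<times> real) \<Rightarrow> 'a \<Rightarrow> real" where
  "rho \<theta> gh x = (let xh = (SOME xh. fst xh = x) in \<theta> (gh xh) - \<theta> xh)"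

definition borel_of :: "'a topology \<Rightarrow> 'a measure" where
  "borel_of X = sigma (topspace X) {U. openin X U}"

end

theory Submission
  imports Defs
begin

lemma Delta_cong:
  assumes "\<forall>t\<in>{0..1}. \<gamma> t = \<gamma>' t"
  shows "Delta phi \<gamma> = Delta phi \<gamma>'"
proof -
  have "\<And>f. (\<forall>t\<in>{0..1}. circle_proj (f t) = phi (\<gamma> t)) \<longleftrightarrow> (\<forall>t\<in>{0..1}. circle_proj (f t) = phi (\<gamma>' t))"
    using assms by auto
  then show ?thesis unfolding Delta_def by simp
qed

lemma join_pathin:
  assumes g1: "pathin X g1" and g2: "pathin X g2" and e: "g1 1 = g2 0"
  shows "pathin X (join_paths g1 g2)"
proof -
  let ?T01 = "top_of_set {0..1::real}"
  have g1': "continuous_map ?T01 X g1" and g2': "continuous_map ?T01 X g2"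
    using g1 g2 unfolding pathin_def by auto
  let ?g = "\<lambda>x. if x \<le> 1/2 then (g1 \<circ> (\<lambda>t. 2 * t)) x else (g2 \<circ> (\<lambda>t. 2 * t -1)) x"
  have "continuous_map (subtopology euclideanreal {0..1}) X ?g"
  proof (intro continuous_map_cases_le continuous_map_compose, force, force)
    show "continuous_map (subtopology ?T01 {x \<in> topspace ?T01. x \<le> 1/2}) ?T01 ((*) 2)"
      by (auto simp: continuous_map_in_subtopology continuous_map_from_subtopology)
    have "continuous_map
           (subtopology (top_of_set {0..1}) {x. 0 \<le> x \<and> x \<le> 1 \<and> 1 \<le> x * 2})
           euclideanreal (\<lambda>t. 2 * t - 1)"
      by (intro continuous_intros) (force intro: continuous_map_from_subtopology)
    then show "continuous_map (subtopology ?T01 {x \<in> topspace ?T01. 1/2 \<le> x}) ?T01 (\<lambda>t. 2 * t - 1)"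
      by (force simp: continuous_map_in_subtopology)
    show "(g1 \<circ> (*) 2) x = (g2 \<circ> (\<lambda>t. 2 * t - 1)) x" if "x \<in> topspace ?T01" "x = 1/2" for x
    proof -
      have "2*x = 1" "2*x - 1 = 0" using that by auto
      then show ?thesis using e by simp
    qed
  qed (auto simp: g1' g2')
  moreover have "?g = join_paths g1 g2"
    unfolding join_paths_def by auto
  ultimately show ?thesis unfolding pathin_def by simp
qed

lemma concat_pathin:
  "ps \<noteq> [] \<Longrightarrow> (\<forall>p\<in>set ps. pathin X p) \<Longrightarrow>
   (\<forall>i. Suc i < length ps \<longrightarrow> (ps!i) 1 = (ps!Suc i) 0) \<Longrightarrow>
   pathin X (concat_paths ps) \<and> concat_paths ps 0 = (ps!0) 0 \<and>
   concat_paths ps 1 = (ps!(length ps - 1)) 1"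
proof (induction ps rule: concat_paths.induct)
  case 1
  then show ?case by simp
next
  case (2 p)
  then show ?case by simp
next
  case (3 p q ps)
  have h: "\<forall>i. Suc i < length (q#ps) \<longrightarrow> ((q#ps)!i) 1 = ((q#ps)!Suc i) 0"
  proof (intro allI impI)
    fix i assume "Suc i < length (q#ps)"
    then show "((q#ps)!i) 1 = ((q#ps)!Suc i) 0"
      using "3.prems"(3)[rule_format, of "Suc i"] by simp
  qed
  have IH: "pathin X (concat_paths (q#ps)) \<and> concat_paths (q#ps) 0 = q 0 \<and>
     concat_paths (q#ps) 1 = ((q#ps)!(length (q#ps) - 1)) 1"
    using "3.IH" "3.prems" h by simp
  have pq: "p 1 = q 0" using "3.prems"(3)[rule_format, of 0] by simp
  have "pathin X (join_paths p (concat_paths (q#ps)))"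
    using join_pathin[of X p "concat_paths (q#ps)"] IH pq "3.prems"(2) by simp
  moreover have "join_paths p (concat_paths (q#ps)) 0 = p 0" by (simp add: join_paths_def)
  moreover have "join_paths p (concat_paths (q#ps)) 1 = ((p#q#ps)!(length (p#q#ps) - 1)) 1"
    using IH by (simp add: join_paths_def)
  ultimately show ?case by simp
qed

lemma concat_eq_on:
  "ps \<noteq> [] \<Longrightarrow> length ps = length qs \<Longrightarrow> (\<forall>i<length ps. \<forall>t\<in>{0..1}. fst ((ps!i) t) = (qs!i) t) \<Longrightarrow>
   \<forall>t\<in>{0..1::real}. fst (concat_paths ps t) = concat_paths qs t"
proof (induction ps arbitrary: qs rule: concat_paths.induct)
  case 1
  then show ?case by simp
next
  case (2 p)
  then obtain q where "qs = [q]" by (cases qs) auto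
  then show ?case using 2 by auto
next
  case (3 p q ps)
  then obtain q1 q2 qs' where qs: "qs = q1 # q2 # qs'"
    by (cases qs; cases "tl qs") auto
  have IH: "\<forall>t\<in>{0..1::real}. fst (concat_paths (q#ps) t) = concat_paths (q2#qs') t"
    using "3.IH"[of "q2#qs'"] "3.prems" qs by force
  have h1: "\<forall>t\<in>{0..1::real}. fst (p t) = q1 t" using "3.prems"(3)[rule_format, of 0] qs by simp
  show ?case
  proof
    fix t :: real assume t: "t \<in> {0..1}"
    show "fst (concat_paths (p # q # ps) t) = concat_paths qs t"
    proof (cases "t \<le> 1/2")
      case True
      then show ?thesis using t h1 qs by (simp add: join_paths_def)
    next
      case False
      then show ?thesis using t IH qs by (simp add: join_paths_def)
    qed
  qed
qed


lemma exp_i_Im_Ln: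
  assumes "norm (u::complex) = 1"
  shows "exp (\<i> * of_real (Im (Ln u))) = u"
proof -
  have u0: "u \<noteq> 0" using assms by auto
  have "Ln u = \<i> * of_real (Im (Ln u))"
    using assms u0 by (simp add: complex_eq_iff)
  then show ?thesis using exp_Ln[OF u0] by simp
qed

lemma cmap_comp_univ:
  assumes "continuous_on UNIV h" "continuous_map X euclidean g"
  shows "continuous_map X euclidean (\<lambda>z. h (g z))"
proof -
  have "continuous_map euclidean euclidean h"
    using assms(1) continuous_map_iff_continuous[of UNIV h] by simp
  from continuous_map_compose[OF assms(2) this] show ?thesis by (simp add: o_def)
qed

lemma bundle_topspace:
  assumes phi: "continuous_map X (top_of_set (sphere 0 1)) phi"
    and y: "y \<in> topspace X"
  shows "(y, s) \<in> topspace (bundle_top X phi)"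
proof -
  define w where "w = phi y"
  have nphi: "\<And>z. z \<in> topspace X \<Longrightarrow> norm (phi z) = 1"
    using phi by (auto simp: continuous_map_def)
  have w1: "norm w = 1" using nphi y w_def by simp
  hence w0: "w \<noteq> 0" by auto
  have cphi: "continuous_map X euclidean phi"
    using phi continuous_map_in_subtopology by blast
  have cre: "continuous_map X euclideanreal (\<lambda>z. Re (phi z / w))"
    by (rule cmap_comp_univ[OF _ cphi, of "\<lambda>v. Re (v / w)"]) (intro continuous_intros, simp add: w0)
  define U where "U = {z \<in> topspace X. Re (phi z / w) \<in> {0<..}}"
  have U: "openin X U"
    unfolding U_def by (rule openin_continuous_map_preimage[OF cre]) simp
  have yU: "y \<in> U" using y w0 unfolding U_def w_def by simp
  define f where "f z = (Im (Ln (phi z / w)) + Im (Ln w)) / (2 * pi)" for z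
  have c1a: "continuous_map (subtopology X U) euclidean (\<lambda>z. phi z / w)"
    by (rule cmap_comp_univ[OF _ continuous_map_from_subtopology[OF cphi], of "\<lambda>v. v / w"]) (intro continuous_intros, simp add: w0)
  have c1b: "(\<lambda>z. phi z / w) ` topspace (subtopology X U) \<subseteq> {v. 0 < Re v}"
    by (auto simp: U_def)
  have c1: "continuous_map (subtopology X U) (top_of_set {v. 0 < Re v}) (\<lambda>z. phi z / w)"
    using c1a c1b by (auto simp: continuous_map_in_subtopology)
  have c2: "continuous_on {v. 0 < Re v} (\<lambda>v. (Im (Ln v) + Im (Ln w)) / (2 * pi))"
    by (intro continuous_intros) (auto simp: complex_nonpos_Reals_iff)
  have cf: "continuous_map (subtopology X U) euclideanreal f"
    using continuous_map_compose[OF c1, of euclideanreal "\<lambda>v. (Im (Ln v) + Im (Ln w)) / (2 * pi)"] c2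
    by (simp add: f_def[abs_def] o_def)
  have lift: "\<forall>z\<in>U. circle_proj (f z) = phi z"
  proof
    fix z assume z: "z \<in> U"
    have n1: "norm (phi z / w) = 1" using z w1 nphi by (auto simp: U_def norm_divide)
    have "circle_proj (f z) = exp (\<i> * of_real (Im (Ln (phi z / w))) + \<i> * of_real (Im (Ln w)))"
    proof -
      have pi0: "complex_of_real pi \<noteq> 0" by simp
      have "2 * of_real pi * \<i> * of_real (f z) = \<i> * of_real (Im (Ln (phi z / w))) + \<i> * of_real (Im (Ln w))"
        unfolding f_def using pi0 by (simp add: field_simps)
      then show ?thesis unfolding circle_proj_def by simp
    qed
    also have "\<dots> = (phi z / w) * w"
      by (simp add: exp_add exp_i_Im_Ln[OF n1] exp_i_Im_Ln[OF w1])
    also have "\<dots> = phi z" using w0 by simp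
    finally show "circle_proj (f z) = phi z" .
  qed
  have "(y, s) \<in> {(z, f z + (s - f y)) | z. z \<in> U}" using yU by force
  then show ?thesis unfolding bundle_top_def topology_generated_by_topspace
    using U cf lift by blast
qed


lemma isotopy_path:
  assumes L: "lifted_isotopy X phi G Gh" and yh: "yh \<in> topspace (bundle_top X phi)"
  shows "pathin (bundle_top X phi) (\<lambda>t. Gh t yh)"
proof -
  let ?Xh = "bundle_top X phi"
  have c: "continuous_map (prod_topology (top_of_set {0..1}) ?Xh) ?Xh (\<lambda>(t, y). Gh t y)"
    using L unfolding lifted_isotopy_def Let_def by blast
  have p: "continuous_map (top_of_set {0..1}) (prod_topology (top_of_set {0..1}) ?Xh) (\<lambda>t. (t, yh))"
    using yh by (simp add: continuous_map_pairwise o_def continuous_map_id[unfolded id_def])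
  have "continuous_map (top_of_set {0..1}) ?Xh ((\<lambda>(t, y). Gh t y) \<circ> (\<lambda>t. (t, yh)))"
    by (rule continuous_map_compose[OF p c])
  then show ?thesis unfolding pathin_def by (simp add: o_def)
qed

lemma step_rho:
  assumes L: "lifted_isotopy X phi G Gh" and T: "theta_function X phi \<theta>"
    and yh: "yh \<in> topspace (bundle_top X phi)"
  shows "\<theta> (Gh 1 yh) - \<theta> yh = Delta phi (\<lambda>t. G t (fst yh))"
proof -
  have pa: "pathin (bundle_top X phi) (\<lambda>t. Gh t yh)" by (rule isotopy_path[OF L yh])
  have "\<theta> (Gh 1 yh) - \<theta> (Gh 0 yh) = Delta phi (fst \<circ> (\<lambda>t. Gh t yh))"
    using T pa unfolding theta_function_def by auto
  moreover have "Gh 0 yh = yh" using L yh unfolding lifted_isotopy_def Let_def by blast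
  moreover have "Delta phi (fst \<circ> (\<lambda>t. Gh t yh)) = Delta phi (\<lambda>t. G t (fst yh))"
    by (rule Delta_cong) (use L yh in \<open>auto simp: lifted_isotopy_def Let_def\<close>)
  ultimately show ?thesis by simp
qed

lemma some_fibre:
  assumes phi: "continuous_map X (top_of_set (sphere 0 1)) phi" and y: "y \<in> topspace X"
  shows "fst (SOME xh::'a \<times> real. fst xh = y) = y \<and> (SOME xh::'a \<times> real. fst xh = y) \<in> topspace (bundle_top X phi)"
proof -
  have f: "fst (SOME xh::'a \<times> real. fst xh = y) = y"
    using someI_ex[of "\<lambda>xh::'a \<times> real. fst xh = y"] by auto
  let ?z = "SOME xh::'a \<times> real. fst xh = y"
  have e: "(y, snd ?z) = ?z" using f by (simp add: prod_eq_iff)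
  have h: "(y, snd ?z) \<in> topspace (bundle_top X phi)" by (rule bundle_topspace[OF phi y])
  have "?z \<in> topspace (bundle_top X phi)" using e h by (rule subst)
  then show ?thesis using f by simp
qed

theorem proposition2p18:
  fixes X :: "'a topology" and G :: "real \<Rightarrow> 'a \<Rightarrow> 'a" and phi :: "'a \<Rightarrow> complex"
    and Gh :: "real \<Rightarrow> 'a \<times> real \<Rightarrow> 'a \<times> real" and \<theta> :: "'a \<times> real \<Rightarrow> real"
    and x :: 'a and \<mu> :: "'a measure"
  assumes "closed_manifold X"
    and "isotopy_from_id X G"
    and "continuous_map X (top_of_set (sphere 0 1)) phi"
    and "lifted_isotopy X phi G Gh"
    and "theta_function X phi \<theta>"
    and "x \<in> topspace X"
  shows "(\<forall>L. ((\<lambda>n. Delta phi (orbit_path G x n) / real n) \<longlonglongrightarrow> L) \<longleftrightarrow>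
              ((\<lambda>n. rho \<theta> (Gh 1 ^^ n) x / real n) \<longlonglongrightarrow> L)) \<and>
         (prob_space \<mu> \<and> sets \<mu> = sets (borel_of X) \<and> space \<mu> = topspace X \<and>
          G 1 \<in> measurable \<mu> \<mu> \<and> distr \<mu> \<mu> (G 1) = \<mu> \<longrightarrow>
          (\<integral>y. Delta phi (\<lambda>t. G t y) \<partial>\<mu>) = (\<integral>y. rho \<theta> (Gh 1) y \<partial>\<mu>))"
proof -
  note phi = assms(3) and L = assms(4) and T = assms(5) and x = assms(6)
  let ?Xh = "bundle_top X phi"
  have rho1: "rho \<theta> (Gh 1) y = Delta phi (\<lambda>t. G t y)" if y: "y \<in> topspace X" for y
  proof -
    let ?z = "SOME xh::'a \<times> real. fst xh = y"
    have a: "fst ?z = y" "?z \<in> topspace ?Xh" using some_fibre[OF phi y] by auto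
    have "\<theta> (Gh 1 ?z) - \<theta> ?z = Delta phi (\<lambda>t. G t (fst ?z))" by (rule step_rho[OF L T a(2)])
    then show ?thesis unfolding rho_def Let_def a(1) by simp
  qed
  have int: "(\<integral>y. Delta phi (\<lambda>t. G t y) \<partial>\<mu>) = (\<integral>y. rho \<theta> (Gh 1) y \<partial>\<mu>)"
    if "space \<mu> = topspace X"
    by (rule Bochner_Integration.integral_cong) (use rho1 that in auto)
  define xh where "xh = (SOME xh::'a \<times> real. fst xh = x)"
  have xh: "fst xh = x" "xh \<in> topspace ?Xh" using some_fibre[OF phi x] xh_def by auto
  define y where "y k = (Gh 1 ^^ k) xh" for k
  have hom: "homeomorphic_map ?Xh ?Xh (Gh 1)" using L unfolding lifted_isotopy_def Let_def by auto
  have img: "Gh 1 z \<in> topspace ?Xh" if "z \<in> topspace ?Xh" for z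
    using homeomorphic_imp_surjective_map[OF hom] that by blast
  have fstG: "fst (Gh t z) = G t (fst z)" if "t \<in> {0..1}" "z \<in> topspace ?Xh" for t z
    using L that unfolding lifted_isotopy_def Let_def by blast
  have Gh0: "Gh 0 z = z" if "z \<in> topspace ?Xh" for z
    using L that unfolding lifted_isotopy_def Let_def by blast
  have ytop: "y k \<in> topspace ?Xh" for k
    by (induction k) (auto simp: y_def xh img)
  have yfst: "fst (y k) = (G 1 ^^ k) x" for k
  proof (induction k)
    case 0 then show ?case by (simp add: y_def xh)
  next
    case (Suc k)
    have "fst (y (Suc k)) = fst (Gh 1 (y k))" by (simp add: y_def)
    also have "\<dots> = G 1 (fst (y k))" using fstG ytop by simp
    finally show ?case using Suc by simp
  qed
  have seq: "Delta phi (orbit_path G x n) = rho \<theta> (Gh 1 ^^ n) x" if n: "n \<ge> 1" for n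
  proof -
    define ps where "ps = map (\<lambda>k t. Gh t (y k)) [0..<n]"
    define qs where "qs = map (\<lambda>k t. G t ((G 1 ^^ k) x)) [0..<n]"
    have ne: "ps \<noteq> []" using n by (simp add: ps_def)
    have "pathin ?Xh (concat_paths ps) \<and> concat_paths ps 0 = (ps!0) 0 \<and>
          concat_paths ps 1 = (ps!(length ps - 1)) 1"
    proof (rule concat_pathin[OF ne])
      show "\<forall>p\<in>set ps. pathin ?Xh p"
        using isotopy_path[OF L ytop] by (auto simp: ps_def)
      show "\<forall>i. Suc i < length ps \<longrightarrow> (ps!i) 1 = (ps!Suc i) 0"
      proof (intro allI impI)
        fix i assume i: "Suc i < length ps"
        have "(ps!i) 1 = Gh 1 (y i)" "(ps!Suc i) 0 = Gh 0 (y (Suc i))" using i by (auto simp: ps_def)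
        moreover have "Gh 0 (y (Suc i)) = y (Suc i)" by (rule Gh0[OF ytop])
        moreover have "y (Suc i) = Gh 1 (y i)" by (simp add: y_def)
        ultimately show "(ps!i) 1 = (ps!Suc i) 0" by simp
      qed
    qed
    moreover have "(ps!0) 0 = xh" using n Gh0[OF xh(2)] by (simp add: ps_def y_def)
    moreover have "(ps!(length ps - 1)) 1 = y n"
    proof -
      have "(ps!(length ps - 1)) 1 = Gh 1 (y (n - 1))" using n by (simp add: ps_def)
      also have "\<dots> = y n" using n by (cases n) (auto simp: y_def)
      finally show ?thesis .
    qed
    ultimately have pc: "pathin ?Xh (concat_paths ps)" "concat_paths ps 0 = xh"
      "concat_paths ps 1 = y n" by auto
    have "\<theta> (y n) - \<theta> xh = Delta phi (fst \<circ> concat_paths ps)"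
    proof -
      have "\<forall>\<sigma>. pathin ?Xh \<sigma> \<longrightarrow> \<theta> (\<sigma> 1) - \<theta> (\<sigma> 0) = Delta phi (fst \<circ> \<sigma>)"
        using T unfolding theta_function_def by blast
      then have "\<theta> (concat_paths ps 1) - \<theta> (concat_paths ps 0) = Delta phi (fst \<circ> concat_paths ps)"
        using pc(1) by blast
      then show ?thesis using pc(2,3) by simp
    qed
    also have "\<dots> = Delta phi (concat_paths qs)"
    proof (rule Delta_cong)
      have "\<forall>t\<in>{0..1::real}. fst (concat_paths ps t) = concat_paths qs t"
      proof (rule concat_eq_on[OF ne])
        show "length ps = length qs" by (simp add: ps_def qs_def)
        show "\<forall>i<length ps. \<forall>t\<in>{0..1}. fst ((ps!i) t) = (qs!i) t"
          using fstG[OF _ ytop] yfst by (auto simp: ps_def qs_def)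
      qed
      then show "\<forall>t\<in>{0..1}. (fst \<circ> concat_paths ps) t = concat_paths qs t" by simp
    qed
    also have "\<dots> = Delta phi (orbit_path G x n)" by (simp add: orbit_path_def qs_def)
    finally show ?thesis unfolding rho_def Let_def xh_def[symmetric] y_def by simp
  qed
  have "(\<lambda>n. Delta phi (orbit_path G x n) / real n) = (\<lambda>n. rho \<theta> (Gh 1 ^^ n) x / real n)"
  proof
    fix n show "Delta phi (orbit_path G x n) / real n = rho \<theta> (Gh 1 ^^ n) x / real n"
      using seq[of n] by (cases "n = 0") auto
  qed
  then show ?thesis using int by simp
qed

end
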